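(* Let $F=\{\mathbf{p}_0,\ldots,\mathbf{p}_n\}\subset\mathbb{R}^d$ be not contained in any $(d-1)$-dimensional affine subspace, $\lambda\in(0,1)$, $S_i(\mathbf{x})=\lambda\mathbf{x}+(1-\lambda)\mathbf{p}_i$ with attractor $X$. If $\mathbf{a}\in\mathcal{D}^{\mathbb{N}}$ is a universal coding of $\mathbf{x}\in X$, then the set $\{T_{a_1\cdots a_j}(\mathbf{x}):j\ge1\}$ is dense in $X$.
   Context: $\mathcal{D}=\{0,\ldots,n\}$. $X$ is the unique non-empty compact set with $X=\bigcup_{i\in\mathcal{D}}S_i(X)$. The coding map is $\pi(\mathbf{a})=\lim_{j\to\infty}(S_{a_1}\circ\cdots\circ S_{a_j})(\mathbf{0})$; $\mathbf{a}$ is a coding of $\mathbf{x}$ if $\pi(\mathbf{a})=\mathbf{x}$. A sequence is universal if it contains every finite word over $\mathcal{D}$ as a block of consecutive digits. $T_i(\mathbf{x})=\frac{\mathbf{x}-(1-\lambda)\mathbf{p}_i}{\lambda}$ is the inverse of $S_i$, and $T_{a_1\cdots a_j}=T_{a_j}\circ\cdots\circ T_{a_1}$. *)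

theory Defs
  imports "HOL-Analysis.Analysis"
begin

definition Smap :: "real \<Rightarrow> (nat \<Rightarrow> 'a::real_vector) \<Rightarrow> nat \<Rightarrow> 'a \<Rightarrow> 'a" where
  "Smap lam p i x = lam *\<^sub>R x + (1 - lam) *\<^sub>R p i"

definition Tmap :: "real \<Rightarrow> (nat \<Rightarrow> 'a::real_vector) \<Rightarrow> nat \<Rightarrow> 'a \<Rightarrow> 'a" where
  "Tmap lam p i x = (1 / lam) *\<^sub>R (x - (1 - lam) *\<^sub>R p i)"

text \<open>Sequences a : nat => nat are 0-indexed: a k is the digit a_{k+1} of the paper.
  Scomp lam p a j = S_{a_1} o ... o S_{a_j}.\<close>
fun Scomp :: "real \<Rightarrow> (nat \<Rightarrow> 'a::real_vector) \<Rightarrow> (nat \<Rightarrow> nat) \<Rightarrow> nat \<Rightarrow> 'a \<Rightarrow> 'a" where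
  "Scomp lam p a 0 = id"
| "Scomp lam p a (Suc j) = Scomp lam p a j \<circ> Smap lam p (a j)"

text \<open>Tcomp lam p a j = T_{a_1 ... a_j} = T_{a_j} o ... o T_{a_1}.\<close>
fun Tcomp :: "real \<Rightarrow> (nat \<Rightarrow> 'a::real_vector) \<Rightarrow> (nat \<Rightarrow> nat) \<Rightarrow> nat \<Rightarrow> 'a \<Rightarrow> 'a" where
  "Tcomp lam p a 0 = id"
| "Tcomp lam p a (Suc j) = Tmap lam p (a j) \<circ> Tcomp lam p a j"

definition coding_map :: "real \<Rightarrow> (nat \<Rightarrow> 'a::real_normed_vector) \<Rightarrow> (nat \<Rightarrow> nat) \<Rightarrow> 'a" where
  "coding_map lam p a = lim (\<lambda>j. Scomp lam p a j 0)"

definition universal :: "nat \<Rightarrow> (nat \<Rightarrow> nat) \<Rightarrow> bool" where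
  "universal n a \<longleftrightarrow>
     (\<forall>w. set w \<subseteq> {0..n} \<longrightarrow> (\<exists>k. map a [k..<k + length w] = w))"

end

theory Submission
  imports Defs
begin

definition Pc :: "real \<Rightarrow> (nat \<Rightarrow> 'a::real_normed_vector) \<Rightarrow> (nat \<Rightarrow> nat) \<Rightarrow> 'a" where
  "Pc lam p b = (\<Sum>k. (lam ^ k * (1 - lam)) *\<^sub>R p (b k))"

lemma Scomp_formula:
  "Scomp lam p b m w = lam ^ m *\<^sub>R w + (\<Sum>k<m. (lam ^ k * (1 - lam)) *\<^sub>R p (b k))"
proof (induction m arbitrary: w)
  case 0
  then show ?case by simp
next
  case (Suc m)
  show ?case
    by (simp add: Suc Smap_def scaleR_add_right algebra_simps)
qed

lemma Scomp_cong:
  assumes "\<forall>i<m. b i = c i"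
  shows "Scomp lam p b m = Scomp lam p c m"
  using assms by (auto simp: Scomp_formula intro!: sum.cong)

lemma Pc_summable:
  fixes p :: "nat \<Rightarrow> 'a::banach"
  assumes "0 < lam" "lam < 1" "\<forall>k. b k \<in> {0..n}"
  shows "summable (\<lambda>k. (lam ^ k * (1 - lam)) *\<^sub>R p (b k))"
proof (rule summable_comparison_test)
  define M where "M = (\<Sum>i\<le>n. norm (p i))"
  show "summable (\<lambda>k. lam ^ k * M)"
    using assms by (intro summable_mult2 summable_geometric) auto
  show "\<exists>N. \<forall>k\<ge>N. norm ((lam ^ k * (1 - lam)) *\<^sub>R p (b k)) \<le> lam ^ k * M"
  proof (intro exI allI impI)
    fix k :: nat
    have bk: "norm (p (b k)) \<le> M"
      unfolding M_def using assms(3)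
      by (intro member_le_sum[where f="\<lambda>i. norm (p i)"]) auto
    have "norm ((lam ^ k * (1 - lam)) *\<^sub>R p (b k)) = lam ^ k * (1 - lam) * norm (p (b k))"
      using assms by simp
    also have "\<dots> \<le> lam ^ k * norm (p (b k))"
      using assms by (intro mult_right_mono) (auto simp: mult_le_cancel_left1)
    also have "\<dots> \<le> lam ^ k * M"
      using assms bk by (intro mult_left_mono) auto
    finally show "norm ((lam ^ k * (1 - lam)) *\<^sub>R p (b k)) \<le> lam ^ k * M" .
  qed
qed

lemma Pc_split:
  fixes p :: "nat \<Rightarrow> 'a::banach"
  assumes "0 < lam" "lam < 1" "\<forall>k. b k \<in> {0..n}"
  shows "Pc lam p b = Scomp lam p b m (Pc lam p (\<lambda>i. b (i + m)))"
proof -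
  have s: "summable (\<lambda>k. (lam ^ k * (1 - lam)) *\<^sub>R p (b k))"
    using Pc_summable[OF assms] .
  have s2: "summable (\<lambda>k. (lam ^ k * (1 - lam)) *\<^sub>R p (b (k + m)))"
    using Pc_summable[OF assms(1,2), of "\<lambda>i. b (i + m)" n] assms(3) by auto
  have "(\<Sum>k. (lam ^ (k + m) * (1 - lam)) *\<^sub>R p (b (k + m)))
      = (\<Sum>k. lam ^ m *\<^sub>R ((lam ^ k * (1 - lam)) *\<^sub>R p (b (k + m))))"
    by (simp add: power_add algebra_simps)
  also have "\<dots> = lam ^ m *\<^sub>R (\<Sum>k. (lam ^ k * (1 - lam)) *\<^sub>R p (b (k + m)))"
    using s2 by (rule suminf_scaleR_right[symmetric])
  finally have e: "(\<Sum>k. (lam ^ (k + m) * (1 - lam)) *\<^sub>R p (b (k + m)))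
      = lam ^ m *\<^sub>R Pc lam p (\<lambda>i. b (i + m))" unfolding Pc_def .
  show ?thesis
    unfolding Scomp_formula
    using suminf_split_initial_segment[OF s, of m] e
    by (simp add: Pc_def)
qed

lemma Scomp_in:
  assumes "\<forall>i\<in>{0..n}. Smap lam p i ` X \<subseteq> X" "\<forall>k. b k \<in> {0..n}" "y \<in> X"
  shows "Scomp lam p b m y \<in> X"
  using assms
proof (induction m arbitrary: y)
  case (Suc m)
  have "Smap lam p (b m) y \<in> X" using Suc.prems by blast
  then show ?case using Suc by simp
qed simp

lemma Pc_in:
  fixes p :: "nat \<Rightarrow> 'a::banach"
  assumes "0 < lam" "lam < 1" "\<forall>k. b k \<in> {0..n}" "closed X" "y0 \<in> X"
    "\<forall>i\<in>{0..n}. Smap lam p i ` X \<subseteq> X"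
  shows "Pc lam p b \<in> X"
proof (rule closed_sequentially[OF assms(4)])
  show "Scomp lam p b m y0 \<in> X" for m
    using Scomp_in assms by blast
  have "(\<lambda>m. lam ^ m *\<^sub>R y0 + (\<Sum>k<m. (lam ^ k * (1 - lam)) *\<^sub>R p (b k)))
     \<longlonglongrightarrow> 0 *\<^sub>R y0 + Pc lam p b"
    unfolding Pc_def
    by (intro tendsto_add tendsto_scaleR LIMSEQ_power_zero summable_LIMSEQ Pc_summable
        assms tendsto_const) (use assms in auto)
  then show "(\<lambda>m. Scomp lam p b m y0) \<longlonglongrightarrow> Pc lam p b"
    by (simp add: Scomp_formula)
qed

lemma Tcomp_Scomp:
  assumes "lam \<noteq> 0"
  shows "Tcomp lam p a j (Scomp lam p a j w) = w"
  using assms by (induction j arbitrary: w) (auto simp: Tmap_def Smap_def)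

lemma decomp:
  assumes "y \<in> X" "X = (\<Union>i\<in>{0..n}. Smap lam p i ` X)"
  shows "\<exists>c z. (\<forall>i. c i \<in> {0..n}) \<and> z \<in> X \<and> y = Scomp lam p c m z"
proof (induction m)
  case 0
  show ?case using assms by (intro exI[of _ "\<lambda>_. 0"] exI[of _ y]) auto
next
  case (Suc m)
  then obtain c z where cz: "\<forall>i. c i \<in> {0..n}" "z \<in> X" "y = Scomp lam p c m z" by blast
  then obtain i z' where iz: "i \<in> {0..n}" "z' \<in> X" "z = Smap lam p i z'"
    using assms(2) by blast
  define c' where "c' = c(m := i)"
  have "Scomp lam p c' m = Scomp lam p c m"
    by (rule Scomp_cong) (auto simp: c'_def)
  then have "Scomp lam p c' (Suc m) z' = y"
    using cz iz by (simp add: c'_def)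
  moreover have "\<forall>i. c' i \<in> {0..n}" using cz iz by (auto simp: c'_def)
  ultimately show ?case using iz by metis
qed

theorem lemma5p1:
  fixes n :: nat and lam :: real and p :: "nat \<Rightarrow> 'a::euclidean_space"
    and X :: "'a set" and a :: "nat \<Rightarrow> nat" and x :: 'a
  assumes affine_span: "affine hull (p ` {0..n}) = UNIV"
    and lam: "0 < lam" "lam < 1"
    and X_attr: "compact X" "X \<noteq> {}" "X = (\<Union>i\<in>{0..n}. Smap lam p i ` X)"
    and digits: "\<forall>k. a k \<in> {0..n}"
    and univ: "universal n a"
    and xX: "x \<in> X"
    and coding: "coding_map lam p a = x"
  shows "closure {Tcomp lam p a j x | j. j \<ge> 1} = X"
proof -
  have clX: "closed X" using X_attr(1) by (rule compact_imp_closed)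
  have inv: "\<forall>i\<in>{0..n}. Smap lam p i ` X \<subseteq> X" using X_attr(3) by blast
  have dig_sh: "\<forall>k. (\<lambda>i. a (i + j)) k \<in> {0..n}" for j using digits by blast
  have xP: "x = Pc lam p a"
  proof -
    have "(\<lambda>j. Scomp lam p a j 0) \<longlonglongrightarrow> Pc lam p a"
      unfolding Scomp_formula Pc_def
      using summable_LIMSEQ[OF Pc_summable[OF lam digits]] by simp
    then show ?thesis using coding unfolding coding_map_def by (simp add: limI)
  qed
  have u: "Tcomp lam p a j x = Pc lam p (\<lambda>i. a (i + j))" for j
  proof -
    have "x = Scomp lam p a j (Pc lam p (\<lambda>i. a (i + j)))"
      using xP Pc_split[OF lam digits] by metis
    then show ?thesis using Tcomp_Scomp[of lam p a j] lam by simp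
  qed
  have uX: "Tcomp lam p a j x \<in> X" for j
    unfolding u using Pc_in[OF lam dig_sh clX xX inv] .
  show ?thesis
  proof
    show "closure {Tcomp lam p a j x | j. j \<ge> 1} \<subseteq> X"
      using uX clX by (intro closure_minimal) auto
  next
    show "X \<subseteq> closure {Tcomp lam p a j x | j. j \<ge> 1}"
    proof
      fix y assume yX: "y \<in> X"
      obtain B where B: "\<forall>z\<in>X. norm z \<le> B"
        using compact_imp_bounded[OF X_attr(1)] bounded_iff by blast
      have B0: "0 \<le> B" using B xX norm_ge_zero order_trans by blast
      show "y \<in> closure {Tcomp lam p a j x | j. j \<ge> 1}"
        unfolding closure_approachable
      proof (intro allI impI)
        fix e :: real assume e: "e > 0"
        obtain m where m: "lam ^ m < e / (2 * B + 1)"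
          using real_arch_pow_inv[of "e / (2 * B + 1)" lam] e B0 lam by auto
        obtain c z where cz: "\<forall>i. c i \<in> {0..n}" "z \<in> X" "y = Scomp lam p c m z"
          using decomp[OF yX X_attr(3)] by blast
        define w where "w = 0 # map c [0..<m]"
        have "set w \<subseteq> {0..n}" using cz by (auto simp: w_def)
        then obtain k where k: "map a [k..<k + length w] = w"
          using univ unfolding universal_def by blast
        have ak: "a (k + 1 + i) = c i" if "i < m" for i
        proof -
          have L: "Suc i < length w" using that by (simp add: w_def)
          have "a (k + Suc i) = map a [k..<k + length w] ! Suc i"
            using L by (simp del: upt_Suc)
          also have "\<dots> = w ! Suc i" using k by simp
          also have "\<dots> = c i" using that by (simp add: w_def del: upt_Suc)
          finally show ?thesis by simp
        qed
        define j where "j = Suc k"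
        define v where "v = Pc lam p (\<lambda>i. a (i + m + j))"
        have vX: "v \<in> X" unfolding v_def using Pc_in[OF lam dig_sh[where j="m + j"] clX xX inv] by (simp add: add.assoc)
        have "Tcomp lam p a j x = Scomp lam p (\<lambda>i. a (i + j)) m v"
          unfolding u v_def using Pc_split[OF lam dig_sh[where j=j], where m=m] by (simp add: add.assoc)
        also have "\<dots> = Scomp lam p c m v"
          by (rule fun_cong[OF Scomp_cong]) (use ak in \<open>auto simp: j_def add.commute\<close>)
        finally have tj: "Tcomp lam p a j x = Scomp lam p c m v" .
        have "dist (Tcomp lam p a j x) y = norm (lam ^ m *\<^sub>R (v - z))"
          unfolding tj cz(3) Scomp_formula dist_norm by (simp add: scaleR_diff_right)
        also have "\<dots> = lam ^ m * norm (v - z)" using lam by simp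
        also have "\<dots> \<le> lam ^ m * (2 * B)"
        proof (rule mult_left_mono)
          have "norm (v - z) \<le> norm v + norm z" by (rule norm_triangle_ineq4)
          moreover have "norm v \<le> B" "norm z \<le> B" using B vX cz(2) by auto
          ultimately show "norm (v - z) \<le> 2 * B" by linarith
        qed (use lam in simp)
        also have "\<dots> < e"
        proof -
          have "lam ^ m * (2 * B + 1) < e" using m B0 by (simp add: pos_less_divide_eq)
          moreover have "lam ^ m * (2 * B) \<le> lam ^ m * (2 * B + 1)"
            using lam by (intro mult_left_mono) auto
          ultimately show ?thesis by linarith
        qed
        finally have "dist (Tcomp lam p a j x) y < e" .
        moreover have "Tcomp lam p a j x \<in> {Tcomp lam p a j x | j. j \<ge> 1}"
          by (rule CollectI, rule exI[of _ j]) (simp add: j_def)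
        ultimately show "\<exists>x'\<in>{Tcomp lam p a j x | j. j \<ge> 1}. dist x' y < e" by blast
      qed
    qed
  qed
qed

end
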